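(* Let $T$ be any shortest-path tree of $G$ rooted at $s$, let $R$ be the forest obtained from $T$ by deleting the edges in $E(T)\cap E(D)$, and let $\widetilde{E}$ be the set of edges $\{x,y\}\in E\setminus(E(T)\cup E(D))$ whose endpoints lie in different connected components of $R$. For an ordered pair $(x,y)$ of vertices define $f(x,y)=d_s(x)+w(x,y)+d_t(y)$ if $\{x,y\}\in\widetilde{E}$ and $f(x,y)=\infty$ otherwise. If $(x,y)$ minimizes $f$ over all ordered pairs and $f(x,y)\neq\infty$, then there exists a simple $st$-path of length $f(x,y)$ containing an edge of $\widetilde{E}$, and such a path is an optimal outward path.
   Context: $G=(V,E,w)$ is a simple, connected, undirected graph with positive edge lengths, $s,t\in V$, $d(\cdot,\cdot)$ the shortest path distance, $d_s(v)=d(s,v)$, $d_t(v)=d(v,t)$. A path is always simple; an $st$-path is a simple path from $s$ to $t$, and its length is the sum of its edge lengths. $D$ is the subgraph formed by the union of all shortest $st$-paths of $G$. An optimal outward path is an $st$-path of minimum length among all $st$-paths containing at least one edge of $E\setminus E(D)$. Note $f(x,y)$ and $f(y,x)$ differ in general. *)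

theory Defs
  imports Complex_Main "HOL-Library.Extended_Real"
begin

definition simple_graph :: "'a set \<Rightarrow> 'a set set \<Rightarrow> bool" where
  "simple_graph V E \<longleftrightarrow> finite V \<and> (\<forall>e\<in>E. \<exists>u v. e = {u, v} \<and> u \<in> V \<and> v \<in> V \<and> u \<noteq> v)"

definition path_edges :: "'a list \<Rightarrow> 'a set set" where
  "path_edges p = {{p ! i, p ! Suc i} | i. Suc i < length p}"

definition is_path :: "'a set set \<Rightarrow> 'a \<Rightarrow> 'a \<Rightarrow> 'a list \<Rightarrow> bool" where
  "is_path F u v p \<longleftrightarrow> p \<noteq> [] \<and> hd p = u \<and> last p = v \<and> distinct p \<and> path_edges p \<subseteq> F"

definition path_len :: "('a set \<Rightarrow> real) \<Rightarrow> 'a list \<Rightarrow> real" where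
  "path_len w p = (\<Sum>i<length p - 1. w {p ! i, p ! Suc i})"

definition connected_graph :: "'a set \<Rightarrow> 'a set set \<Rightarrow> bool" where
  "connected_graph V E \<longleftrightarrow> (\<forall>u\<in>V. \<forall>v\<in>V. \<exists>p. is_path E u v p)"

definition dist :: "'a set set \<Rightarrow> ('a set \<Rightarrow> real) \<Rightarrow> 'a \<Rightarrow> 'a \<Rightarrow> real" where
  "dist E w u v = Inf {path_len w p | p. is_path E u v p}"

definition shortest_path :: "'a set set \<Rightarrow> ('a set \<Rightarrow> real) \<Rightarrow> 'a \<Rightarrow> 'a \<Rightarrow> 'a list \<Rightarrow> bool" where
  "shortest_path E w u v p \<longleftrightarrow> is_path E u v p \<and> path_len w p = dist E w u v"

definition ED :: "'a set set \<Rightarrow> ('a set \<Rightarrow> real) \<Rightarrow> 'a \<Rightarrow> 'a \<Rightarrow> 'a set set" where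
  "ED E w s t = \<Union> {path_edges p | p. shortest_path E w s t p}"

definition spanning_tree :: "'a set \<Rightarrow> 'a set set \<Rightarrow> 'a set set \<Rightarrow> bool" where
  "spanning_tree V E T \<longleftrightarrow> T \<subseteq> E \<and> (\<forall>u\<in>V. \<forall>v\<in>V. \<exists>!p. is_path T u v p)"

definition shortest_path_tree :: "'a set \<Rightarrow> 'a set set \<Rightarrow> ('a set \<Rightarrow> real) \<Rightarrow> 'a \<Rightarrow> 'a set set \<Rightarrow> bool" where
  "shortest_path_tree V E w s T \<longleftrightarrow> spanning_tree V E T \<and>
     (\<forall>v\<in>V. \<forall>p. is_path T s v p \<longrightarrow> path_len w p = dist E w s v)"

definition Etilde :: "'a set set \<Rightarrow> ('a set \<Rightarrow> real) \<Rightarrow> 'a \<Rightarrow> 'a \<Rightarrow> 'a set set \<Rightarrow> 'a set set" where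
  "Etilde E w s t T = {e \<in> E - (T \<union> ED E w s t). \<exists>x y. e = {x, y} \<and>
       \<not> (\<exists>p. is_path (T - ED E w s t) x y p)}"

definition fval :: "'a set set \<Rightarrow> ('a set \<Rightarrow> real) \<Rightarrow> 'a \<Rightarrow> 'a \<Rightarrow> 'a set set \<Rightarrow> 'a \<Rightarrow> 'a \<Rightarrow> ereal" where
  "fval E w s t T x y = (if {x, y} \<in> Etilde E w s t T
     then ereal (dist E w s x + w {x, y} + dist E w y t) else \<infinity>)"

definition optimal_outward :: "'a set set \<Rightarrow> ('a set \<Rightarrow> real) \<Rightarrow> 'a \<Rightarrow> 'a \<Rightarrow> 'a list \<Rightarrow> bool" where
  "optimal_outward E w s t p \<longleftrightarrow> is_path E s t p \<and> path_edges p - ED E w s t \<noteq> {} \<and>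
     (\<forall>q. is_path E s t q \<and> path_edges q - ED E w s t \<noteq> {} \<longrightarrow> path_len w p \<le> path_len w q)"

end

theory Submission imports Defs begin

lemma pe_nil[simp]: "path_edges [] = {}" and pe_single[simp]: "path_edges [a] = {}"
  by (auto simp: path_edges_def)

lemma pe_cons2[simp]: "path_edges (a # b # p) = insert {a,b} (path_edges (b # p))"
  unfolding path_edges_def
  apply (rule set_eqI; rule iffI)
   apply (auto simp: less_Suc_eq_0_disj nth_Cons split: nat.splits)[1]
  apply clarsimp
  apply (erule disjE)
   apply (rule exI[of _ 0]; simp)
  apply clarsimp
  subgoal for i by (rule exI[of _ "Suc i"]; simp)
  done

lemma pl_nil[simp]: "path_len w [] = 0" and pl_single[simp]: "path_len w [a] = 0"
  by (auto simp: path_len_def)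

lemma pl_cons2[simp]: "path_len w (a # b # p) = w {a,b} + path_len w (b # p)"
  unfolding path_len_def by (simp only: length_Cons diff_Suc_1 sum.lessThan_Suc_shift) simp

lemma pe_append: "xs \<noteq> [] \<Longrightarrow> ys \<noteq> [] \<Longrightarrow>
  path_edges (xs @ ys) = path_edges xs \<union> {{last xs, hd ys}} \<union> path_edges ys"
proof (induction xs rule: induct_list012)
  case (3 a b p) then show ?case by (cases ys) auto
qed (auto simp: neq_Nil_conv)

lemma pl_append: "xs \<noteq> [] \<Longrightarrow> ys \<noteq> [] \<Longrightarrow>
  path_len w (xs @ ys) = path_len w xs + w {last xs, hd ys} + path_len w ys"
proof (induction xs rule: induct_list012)
  case (3 a b p) then show ?case by (cases ys) auto
qed (auto simp: neq_Nil_conv)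

lemma pe_append_shared: "xs \<noteq> [] \<Longrightarrow> ys \<noteq> [] \<Longrightarrow> last xs = hd ys \<Longrightarrow>
  path_edges (xs @ tl ys) = path_edges xs \<union> path_edges ys"
  by (cases ys; cases "tl ys") (auto simp: pe_append)

lemma pl_append_shared: "xs \<noteq> [] \<Longrightarrow> ys \<noteq> [] \<Longrightarrow> last xs = hd ys \<Longrightarrow>
  path_len w (xs @ tl ys) = path_len w xs + path_len w ys"
  by (cases ys; cases "tl ys") (auto simp: pl_append)

lemma pe_rev[simp]: "path_edges (rev p) = path_edges p"
proof (induction p)
  case (Cons a p)
  show ?case
  proof (cases p)
    case (Cons b q)
    have "path_edges (rev (a # p)) = path_edges (rev p @ [a])" by simp
    also have "\<dots> = path_edges (rev p) \<union> {{b, a}}"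
      by (subst pe_append) (auto simp: last_rev Cons)
    finally show ?thesis using Cons.IH Cons by (auto simp: insert_commute)
  qed simp
qed auto

lemma pl_rev[simp]: "path_len w (rev p) = path_len w p"
proof (induction p)
  case (Cons a p)
  show ?case
  proof (cases p)
    case (Cons b q)
    have "path_len w (rev (a # p)) = path_len w (rev p @ [a])" by simp
    also have "\<dots> = path_len w (rev p) + w {b, a}"
      by (subst pl_append) (auto simp: last_rev Cons)
    finally show ?thesis using Cons.IH Cons by (auto simp: insert_commute)
  qed simp
qed auto

lemma last_take_Suc: "i < length p \<Longrightarrow> last (take (Suc i) p) = p ! i"
  by (simp add: take_Suc_conv_app_nth)

lemma split_at: "i < length p \<Longrightarrow> take (Suc i) p @ tl (drop i p) = p"
  by (metis Cons_nth_drop_Suc append_take_drop_id list.sel(3) take_Suc_conv_app_nth append_assoc append_Cons append_Nil)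

lemma pl_split: "i < length p \<Longrightarrow> path_len w p = path_len w (take (Suc i) p) + path_len w (drop i p)"
  by (subst pl_append_shared[symmetric]) (auto simp: split_at last_take_Suc hd_drop_conv_nth)

lemma pe_split: "i < length p \<Longrightarrow> path_edges p = path_edges (take (Suc i) p) \<union> path_edges (drop i p)"
  by (subst pe_append_shared[symmetric]) (auto simp: split_at last_take_Suc hd_drop_conv_nth)

lemma pl_nonneg: "\<forall>e\<in>path_edges p. w e > 0 \<Longrightarrow> 0 \<le> path_len w p"
proof (induction p rule: induct_list012)
  case (3 a b p) then show ?case by (smt (verit) insertCI pe_cons2 pl_cons2)
qed auto

lemma pl_pos: "\<forall>e\<in>path_edges p. w e > 0 \<Longrightarrow> 2 \<le> length p \<Longrightarrow> 0 < path_len w p"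
proof (cases p rule: remdups_adj.cases)
  case (3 a b p')
  assume h: "\<forall>e\<in>path_edges p. w e > 0"
  then have "0 \<le> path_len w (b # p')" using 3 by (intro pl_nonneg) auto
  then show ?thesis using h 3 by auto
qed auto

lemma is_path_single[simp]: "is_path F u u [u]"
  by (simp add: is_path_def)

lemma is_path_mono: "is_path F u v p \<Longrightarrow> F \<subseteq> F' \<Longrightarrow> is_path F' u v p"
  by (auto simp: is_path_def)

lemma is_path_rev: "is_path F u v p \<Longrightarrow> is_path F v u (rev p)"
  by (auto simp: is_path_def hd_rev last_rev)

lemma is_path_take: "is_path F u v p \<Longrightarrow> i < length p \<Longrightarrow> is_path F u (p!i) (take (Suc i) p)"
  unfolding is_path_def using pe_split[of i p]
  by (intro conjI) (simp_all add: last_take_Suc)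

lemma is_path_drop: "is_path F u v p \<Longrightarrow> i < length p \<Longrightarrow> is_path F (p!i) v (drop i p)"
  unfolding is_path_def using pe_split[of i p]
  by (intro conjI) (simp_all add: hd_drop_conv_nth)

lemma is_path_append_shared: "is_path F u a p \<Longrightarrow> is_path F a v q \<Longrightarrow> set p \<inter> set q \<subseteq> {a}
  \<Longrightarrow> is_path F u v (p @ tl q)"
proof -
  assume p: "is_path F u a p" and q: "is_path F a v q" and d: "set p \<inter> set q \<subseteq> {a}"
  have q1: "q = a # tl q" using q unfolding is_path_def by (metis list.collapse)
  have na: "a \<notin> set (tl q)" using q q1 unfolding is_path_def by (metis distinct.simps(2))
  have sq: "set q = insert a (set (tl q))" by (subst q1) simp
  have "set p \<inter> set (tl q) = {}" using d na sq by blast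
  moreover have "last (p @ tl q) = v"
    using p q q1 unfolding is_path_def by (cases "tl q") auto
  moreover have "path_edges (p @ tl q) = path_edges p \<union> path_edges q"
    using p q q1 unfolding is_path_def by (intro pe_append_shared) auto
  ultimately show ?thesis using p q unfolding is_path_def
    by (intro conjI) (simp_all add: distinct_tl)
qed

lemma is_path_append: "is_path F u a p \<Longrightarrow> is_path F b v q \<Longrightarrow> set p \<inter> set q = {}
  \<Longrightarrow> {a, b} \<in> F \<Longrightarrow> is_path F u v (p @ q)"
  unfolding is_path_def by (auto simp: pe_append)

lemma join:
  assumes p: "is_path F u a p" and q: "is_path F b v q" and ne: "set p \<inter> set q \<noteq> {}"
  obtains i j where "i < length p" "j < length q" "p!i = q!j"
    "is_path F u v (take (Suc i) p @ tl (drop j q))" "\<forall>k<i. p!k \<notin> set q"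
    "path_len w (take (Suc i) p @ tl (drop j q)) = path_len w (take (Suc i) p) + path_len w (drop j q)"
    "path_edges (take (Suc i) p @ tl (drop j q)) = path_edges (take (Suc i) p) \<union> path_edges (drop j q)"
proof -
  define P where "P = (\<lambda>i. i < length p \<and> p!i \<in> set q)"
  from ne obtain z where z: "z \<in> set p" "z \<in> set q" by blast
  then obtain i0 where "i0 < length p" "p!i0 = z" by (auto simp: in_set_conv_nth)
  then have "P i0" using z by (auto simp: P_def)
  define i where "i = (LEAST i. P i)"
  have Pi: "P i" unfolding i_def by (rule LeastI, fact)
  have mi: "\<forall>k<i. p!k \<notin> set q"
  proof (intro allI impI)
    fix k assume "k < i"
    then have "\<not> P k" unfolding i_def by (rule not_less_Least)
    moreover have "k < length p" using \<open>k < i\<close> Pi unfolding P_def by simp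
    ultimately show "p!k \<notin> set q" unfolding P_def by simp
  qed
  from Pi obtain j where j: "j < length q" "q!j = p!i" by (auto simp: P_def in_set_conv_nth)
  have il: "i < length p" using Pi P_def by auto
  have tp: "is_path F u (p!i) (take (Suc i) p)" using is_path_take[OF p il] .
  have dq: "is_path F (p!i) v (drop j q)" using is_path_drop[OF q j(1)] j by simp
  have "set (take (Suc i) p) \<inter> set (drop j q) \<subseteq> {p!i}"
  proof
    fix z assume z: "z \<in> set (take (Suc i) p) \<inter> set (drop j q)"
    then obtain k where k: "k < Suc i" "k < length p" "z = p!k" by (auto simp: in_set_conv_nth)
    have "z \<in> set q" using z by (auto dest: in_set_dropD)
    then have "k = i" using mi k less_SucE by blast
    then show "z \<in> {p!i}" using k by simp
  qed
  then have path: "is_path F u v (take (Suc i) p @ tl (drop j q))"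
    by (rule is_path_append_shared[OF tp dq])
  show ?thesis
    apply (rule that[OF il j(1) j(2)[symmetric] path mi])
    using tp dq unfolding is_path_def
    by (simp_all add: pl_append_shared pe_append_shared)
qed

lemma set_tl_sub: "x \<in> set (tl xs) \<Longrightarrow> x \<in> set xs"
  by (cases xs) auto

lemma pe_nth: "Suc k < length p \<Longrightarrow> {p!k, p!Suc k} \<in> path_edges p"
  unfolding path_edges_def by blast

lemma pe_elem: "e \<in> path_edges p \<Longrightarrow> \<exists>k. Suc k < length p \<and> e = {p!k, p!Suc k}"
  unfolding path_edges_def by blast

lemma vertex_in_edge: "z \<in> set p \<Longrightarrow> 2 \<le> length p \<Longrightarrow> \<exists>e\<in>path_edges p. z \<in> e"
proof -
  assume z: "z \<in> set p" and l: "2 \<le> length p"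
  then obtain k where k: "k < length p" "z = p!k" by (auto simp: in_set_conv_nth)
  show ?thesis
  proof (cases "Suc k < length p")
    case True then show ?thesis using pe_nth[OF True] k by blast
  next
    case False
    then have "k = Suc (k - 1)" "Suc (k-1) < length p" using k l by auto
    then show ?thesis using pe_nth[of "k-1" p] k by (metis insertCI)
  qed
qed

lemma pl_take_le: "\<forall>e\<in>path_edges p. w e > 0 \<Longrightarrow> i < length p \<Longrightarrow> path_len w (take (Suc i) p) \<le> path_len w p"
  using pl_split[of i p w] pl_nonneg[of "drop i p" w] pe_split[of i p] by auto

lemma pl_take_less: "\<forall>e\<in>path_edges p. w e > 0 \<Longrightarrow> Suc i < length p \<Longrightarrow> path_len w (take (Suc i) p) < path_len w p"
  using pl_split[of i p w] pl_pos[of "drop i p" w] pe_split[of i p] by auto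

lemma pl_drop_le: "\<forall>e\<in>path_edges p. w e > 0 \<Longrightarrow> i < length p \<Longrightarrow> path_len w (drop i p) \<le> path_len w p"
  using pl_split[of i p w] pl_nonneg[of "take (Suc i) p" w] pe_split[of i p] by auto

lemma pl_drop_less: "\<forall>e\<in>path_edges p. w e > 0 \<Longrightarrow> 0 < i \<Longrightarrow> i < length p \<Longrightarrow> path_len w (drop i p) < path_len w p"
  using pl_split[of i p w] pl_pos[of "take (Suc i) p" w] pe_split[of i p] by auto

locale G =
  fixes V :: "'a set" and E :: "'a set set" and w :: "'a set \<Rightarrow> real" and s t :: 'a and T :: "'a set set"
  assumes sg: "simple_graph V E" and cg: "connected_graph V E" and wpos: "\<forall>e\<in>E. w e > 0"
    and sV: "s \<in> V" and tV: "t \<in> V" and spt: "shortest_path_tree V E w s T"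
begin

abbreviation "d \<equiv> dist E w"
abbreviation "EDs \<equiv> ED E w s t"
abbreviation "R \<equiv> T - ED E w s t"

definition Dv where "Dv v \<longleftrightarrow> (\<exists>p. shortest_path E w s t p \<and> v \<in> set p)"
definition conn where "conn a b \<longleftrightarrow> (\<exists>p. is_path R a b p)"

lemma TE: "T \<subseteq> E" using spt by (simp add: shortest_path_tree_def spanning_tree_def)

lemma edge_form: "e \<in> E \<Longrightarrow> \<exists>u v. e = {u, v} \<and> u \<in> V \<and> v \<in> V \<and> u \<noteq> v"
proof -
  assume e: "e \<in> E"
  have "\<forall>e\<in>E. \<exists>u v. e = {u, v} \<and> u \<in> V \<and> v \<in> V \<and> u \<noteq> v"
    using sg by (simp add: simple_graph_def)
  then show ?thesis using e by (rule bspec)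
qed

lemma edgeV: "{a, b} \<in> E \<Longrightarrow> a \<in> V \<and> b \<in> V \<and> a \<noteq> b"
proof -
  assume "{a, b} \<in> E"
  from edge_form[OF this] obtain u v where "{a,b} = {u,v}" "u\<in>V" "v\<in>V" "u\<noteq>v"
    by (elim exE conjE)
  then show ?thesis by (auto simp: doubleton_eq_iff)
qed

lemma edgeV': "e \<in> E \<Longrightarrow> a \<in> e \<Longrightarrow> a \<in> V"
proof -
  assume "e \<in> E" "a \<in> e"
  from edge_form[OF this(1)] obtain u v where "e = {u,v}" "u\<in>V" "v\<in>V"
    by (elim exE conjE)
  then show ?thesis using \<open>a \<in> e\<close> by auto
qed

lemma path_pos: "is_path E u v p \<Longrightarrow> \<forall>e\<in>path_edges p. w e > 0"
  using wpos unfolding is_path_def by blast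

lemma path_V: "is_path E u v p \<Longrightarrow> u \<in> V \<Longrightarrow> set p \<subseteq> V"
proof
  fix z assume p: "is_path E u v p" and u: "u \<in> V" and z: "z \<in> set p"
  show "z \<in> V"
  proof (cases "2 \<le> length p")
    case True
    obtain e where e: "e \<in> path_edges p" "z \<in> e" using vertex_in_edge[OF z True] by (elim bexE)
    have "path_edges p \<subseteq> E" using p by (simp add: is_path_def)
    then have "e \<in> E" using e(1) by (rule subsetD)
    then show ?thesis using e(2) by (rule edgeV')
  next
    case False
    have "p \<noteq> []" "hd p = u" using p unfolding is_path_def by auto
    then have "0 < length p" by simp
    then have "length p = 1" using False by linarith
    then obtain a where "p = [a]" by (metis One_nat_def length_0_conv length_Suc_conv)
    then show ?thesis using z u \<open>hd p = u\<close> by simp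
  qed
qed

lemma path_V2: "is_path E u v p \<Longrightarrow> u \<in> V \<Longrightarrow> v \<in> V"
  using path_V unfolding is_path_def by (metis last_in_set subsetD)

lemma finite_paths: "u \<in> V \<Longrightarrow> finite {p. is_path E u v p}"
proof -
  assume u: "u \<in> V"
  have fV: "finite V" using sg simple_graph_def by blast
  have "{p. is_path E u v p} \<subseteq> {p. set p \<subseteq> V \<and> length p \<le> card V}"
  proof clarsimp
    fix p assume p: "is_path E u v p"
    then have "set p \<subseteq> V" using path_V u by blast
    moreover have "length p = card (set p)" using p unfolding is_path_def by (simp add: distinct_card)
    ultimately show "set p \<subseteq> V \<and> length p \<le> card V" using card_mono[OF fV] by auto
  qed
  moreover have "finite {p. set p \<subseteq> V \<and> length p \<le> card V}"
    using finite_lists_length_le[OF fV] by simp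
  ultimately show ?thesis by (rule finite_subset)
qed

lemma dist_le: "is_path E u v p \<Longrightarrow> d u v \<le> path_len w p"
  unfolding dist_def
  apply (rule cInf_lower)
   apply blast
  apply (rule bdd_belowI[of _ 0])
  using pl_nonneg path_pos by blast

lemma dist_attained: "u \<in> V \<Longrightarrow> v \<in> V \<Longrightarrow> \<exists>p. is_path E u v p \<and> path_len w p = d u v"
proof -
  assume u: "u \<in> V" and v: "v \<in> V"
  let ?S = "{path_len w p | p. is_path E u v p}"
  have ne: "?S \<noteq> {}" using cg u v unfolding connected_graph_def by blast
  have fin: "finite ?S" using finite_paths[OF u] by (simp add: setcompr_eq_image)
  have "Inf ?S \<in> ?S" using cInf_eq_Min[OF fin ne] Min_in[OF fin ne] by simp
  then show ?thesis unfolding dist_def by auto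
qed

lemma tri: "is_path E u a p \<Longrightarrow> is_path E a v q \<Longrightarrow> d u v \<le> path_len w p + path_len w q"
proof -
  assume p: "is_path E u a p" and q: "is_path E a v q"
  have "a \<in> set p \<inter> set q" using p q unfolding is_path_def by (metis IntI last_in_set list.set_sel(1))
  then have ne: "set p \<inter> set q \<noteq> {}" by blast
  obtain i j where ij: "i < length p" "j < length q"
    "is_path E u v (take (Suc i) p @ tl (drop j q))"
    "path_len w (take (Suc i) p @ tl (drop j q)) = path_len w (take (Suc i) p) + path_len w (drop j q)"
    by (rule join[OF p q ne, where w=w]) blast
  have "path_len w (take (Suc i) p) \<le> path_len w p" using pl_take_le path_pos[OF p] ij by blast
  moreover have "path_len w (drop j q) \<le> path_len w q" using pl_drop_le path_pos[OF q] ij by blast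
  ultimately show ?thesis using dist_le[OF ij(3)] ij(4) by linarith
qed


lemma sp_exists: "\<exists>p. shortest_path E w s t p"
  using dist_attained[OF sV tV] unfolding shortest_path_def by blast

lemma sp_ED: "shortest_path E w s t p \<Longrightarrow> path_edges p \<subseteq> EDs"
  unfolding ED_def by (rule Union_upper) (rule CollectI, rule exI[of _ p], simp)

lemma Dv_V: "Dv v \<Longrightarrow> v \<in> V"
  unfolding Dv_def shortest_path_def using path_V sV by blast

lemma Dv_s: "Dv s"
proof -
  obtain p where "shortest_path E w s t p" using sp_exists by blast
  moreover then have "s \<in> set p" unfolding shortest_path_def is_path_def by (metis list.set_sel(1))
  ultimately show ?thesis unfolding Dv_def by blast
qed

lemma Dv_t: "Dv t"
proof -
  obtain p where "shortest_path E w s t p" using sp_exists by blast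
  moreover then have "t \<in> set p" unfolding shortest_path_def is_path_def by (metis last_in_set)
  ultimately show ?thesis unfolding Dv_def by blast
qed

lemma ED_Dv: "e \<in> EDs \<Longrightarrow> a \<in> e \<Longrightarrow> Dv a"
proof -
  assume e: "e \<in> EDs" and a: "a \<in> e"
  then obtain p where p: "shortest_path E w s t p" "e \<in> path_edges p" unfolding ED_def by auto
  then obtain k where k: "Suc k < length p" "e = {p!k, p!Suc k}" using pe_elem by blast
  then have "a \<in> set p" using a by (auto simp: nth_mem)
  then show ?thesis using p unfolding Dv_def by blast
qed

lemma Dv_sum: "Dv v \<Longrightarrow> d s v + d v t = d s t"
proof -
  assume "Dv v"
  then obtain p where p: "shortest_path E w s t p" "v \<in> set p" unfolding Dv_def by blast
  then obtain k where k: "k < length p" "p!k = v" by (auto simp: in_set_conv_nth)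
  have pp: "is_path E s t p" "path_len w p = d s t" using p(1) unfolding shortest_path_def by auto
  have "path_len w p = path_len w (take (Suc k) p) + path_len w (drop k p)" using pl_split k(1) .
  moreover have "d s v \<le> path_len w (take (Suc k) p)" using dist_le is_path_take[OF pp(1) k(1)] k(2) by simp
  moreover have "d v t \<le> path_len w (drop k p)" using dist_le is_path_drop[OF pp(1) k(1)] k(2) by simp
  ultimately have 1: "d s v + d v t \<le> d s t" using pp(2) by linarith
  have vV: "v \<in> V" using Dv_V \<open>Dv v\<close> .
  obtain p1 where p1: "is_path E s v p1" "path_len w p1 = d s v" using dist_attained[OF sV vV] by blast
  obtain p2 where p2: "is_path E v t p2" "path_len w p2 = d v t" using dist_attained[OF vV tV] by blast
  have "d s t \<le> d s v + d v t" using tri[OF p1(1) p2(1)] p1(2) p2(2) by simp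
  then show ?thesis using 1 by linarith
qed

lemma Ssuf: "Dv r \<Longrightarrow> \<exists>S. is_path E r t S \<and> path_len w S = d r t \<and> (\<forall>z\<in>set S. Dv z \<and> (z \<noteq> r \<longrightarrow> d s r < d s z))"
proof -
  assume "Dv r"
  then obtain p where p: "shortest_path E w s t p" "r \<in> set p" unfolding Dv_def by blast
  then obtain k where k: "k < length p" "p!k = r" by (auto simp: in_set_conv_nth)
  have pp: "is_path E s t p" "path_len w p = d s t" using p(1) unfolding shortest_path_def by auto
  define S where "S = drop k p"
  have Sp: "is_path E r t S" using is_path_drop[OF pp(1) k(1)] k(2) S_def by simp
  have "path_len w p = path_len w (take (Suc k) p) + path_len w S" using pl_split k(1) S_def by simp
  moreover have "d s r \<le> path_len w (take (Suc k) p)" using dist_le is_path_take[OF pp(1) k(1)] k(2) by simp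
  moreover have "d r t \<le> path_len w S" using dist_le Sp by simp
  ultimately have lS: "path_len w S = d r t" using pp(2) Dv_sum[OF \<open>Dv r\<close>] by linarith
  have "\<forall>z\<in>set S. Dv z \<and> (z \<noteq> r \<longrightarrow> d s r < d s z)"
  proof
    fix z assume z: "z \<in> set S"
    have Dz: "Dv z" using z p(1) unfolding S_def Dv_def by (meson in_set_dropD)
    moreover have "z \<noteq> r \<longrightarrow> d s r < d s z"
    proof
      assume zr: "z \<noteq> r"
      obtain m where m: "m < length S" "S!m = z" using z by (auto simp: in_set_conv_nth)
      have "m \<noteq> 0" using m zr Sp unfolding is_path_def by (metis hd_conv_nth)
      then have "path_len w (drop m S) < path_len w S"
        using pl_drop_less[OF path_pos[OF Sp] _ m(1)] by simp
      moreover have "d z t \<le> path_len w (drop m S)" using dist_le is_path_drop[OF Sp m(1)] m(2) by simp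
      ultimately have "d z t < d r t" using lS by linarith
      then show "d s r < d s z" using Dv_sum[OF Dz] Dv_sum[OF \<open>Dv r\<close>] by linarith
    qed
    ultimately show "Dv z \<and> (z \<noteq> r \<longrightarrow> d s r < d s z)" by blast
  qed
  then show ?thesis using Sp lS by blast
qed

lemma F6: "is_path E s v p \<Longrightarrow> path_len w p = d s v \<Longrightarrow> z \<in> set p \<Longrightarrow> d s z \<le> d s v \<and> (z \<noteq> v \<longrightarrow> d s z < d s v)"
proof -
  assume p: "is_path E s v p" and l: "path_len w p = d s v" and z: "z \<in> set p"
  obtain k where k: "k < length p" "p!k = z" using z by (auto simp: in_set_conv_nth)
  have 1: "d s z \<le> path_len w (take (Suc k) p)" using dist_le is_path_take[OF p k(1)] k(2) by simp
  have "path_len w (take (Suc k) p) \<le> path_len w p" using pl_take_le[OF path_pos[OF p] k(1)] by simp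
  moreover have "z \<noteq> v \<longrightarrow> path_len w (take (Suc k) p) < path_len w p"
  proof
    assume "z \<noteq> v"
    have "p \<noteq> []" "last p = v" using p unfolding is_path_def by auto
    then have "p ! (length p - 1) = v" by (simp add: last_conv_nth)
    then have "Suc k \<noteq> length p" using k \<open>z \<noteq> v\<close> by (metis diff_Suc_1)
    then have "Suc k < length p" using k by linarith
    then show "path_len w (take (Suc k) p) < path_len w p" using pl_take_less[OF path_pos[OF p]] by simp
  qed
  ultimately show ?thesis using 1 l by linarith
qed

lemma F5: "Dv v \<Longrightarrow> is_path E s v p \<Longrightarrow> path_len w p = d s v \<Longrightarrow> path_edges p \<subseteq> EDs"
proof -
  assume Dv: "Dv v" and p: "is_path E s v p" and l: "path_len w p = d s v"
  obtain S where S: "is_path E v t S" "path_len w S = d v t" using Ssuf[OF Dv] by blast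
  have "v \<in> set p \<inter> set S" using p S(1) unfolding is_path_def by (metis IntI last_in_set list.set_sel(1))
  then have ne: "set p \<inter> set S \<noteq> {}" by blast
  obtain i j where ij: "i < length p" "j < length S" "p!i = S!j"
    "is_path E s t (take (Suc i) p @ tl (drop j S))"
    "path_len w (take (Suc i) p @ tl (drop j S)) = path_len w (take (Suc i) p) + path_len w (drop j S)"
    "path_edges (take (Suc i) p @ tl (drop j S)) = path_edges (take (Suc i) p) \<union> path_edges (drop j S)"
    by (rule join[OF p S(1) ne, where w=w]) blast
  have dS: "path_len w (drop j S) \<le> path_len w S" using pl_drop_le[OF path_pos[OF S(1)] ij(2)] .
  have dC: "d s t \<le> path_len w (take (Suc i) p @ tl (drop j S))" using dist_le ij(4) .
  have "Suc i = length p"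
  proof (rule ccontr)
    assume "Suc i \<noteq> length p"
    then have "Suc i < length p" using ij(1) by linarith
    then have "path_len w (take (Suc i) p) < path_len w p" using pl_take_less[OF path_pos[OF p]] by simp
    then show False using dS dC ij(5) l S(2) Dv_sum[OF Dv] by linarith
  qed
  then have tp: "take (Suc i) p = p" by simp
  have "p \<noteq> []" "last p = v" using p unfolding is_path_def by auto
  then have "p ! (length p - 1) = v" by (simp add: last_conv_nth)
  then have "p!i = v" using \<open>Suc i = length p\<close> by (metis diff_Suc_1)
  have "S \<noteq> []" "hd S = v" "distinct S" using S(1) unfolding is_path_def by auto
  then have "S!0 = v" by (simp add: hd_conv_nth)
  then have "S!j = S!0" using ij(3) \<open>p!i = v\<close> by simp
  then have "j = 0" using nth_eq_iff_index_eq[OF \<open>distinct S\<close> ij(2), of 0] \<open>S \<noteq> []\<close> by simp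
  then have C: "shortest_path E w s t (p @ tl S)"
    using ij(4,5) tp S(2) l Dv_sum[OF Dv] dC unfolding shortest_path_def by simp
  have "path_edges p \<subseteq> path_edges (p @ tl S)" using ij(6) tp \<open>j = 0\<close> by simp
  then show ?thesis using sp_ED[OF C] by (rule subset_trans)
qed

lemma Tpath_ex: "v \<in> V \<Longrightarrow> \<exists>p. is_path T s v p"
proof -
  assume v: "v \<in> V"
  have "\<forall>u\<in>V. \<forall>v\<in>V. \<exists>!p. is_path T u v p" using spt by (simp add: shortest_path_tree_def spanning_tree_def)
  then have "\<exists>!p. is_path T s v p" using sV v by simp
  then show ?thesis by (rule ex1_implies_ex)
qed

lemma Tpath_len: "is_path T s v p \<Longrightarrow> v \<in> V \<Longrightarrow> path_len w p = d s v"
proof -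
  assume p: "is_path T s v p" and v: "v \<in> V"
  have "\<forall>v\<in>V. \<forall>p. is_path T s v p \<longrightarrow> path_len w p = d s v" using spt by (simp add: shortest_path_tree_def)
  then show ?thesis using p v by simp
qed

lemma TpathE: "is_path T s v p \<Longrightarrow> is_path E s v p"
  by (rule is_path_mono[OF _ TE])

lemma RT: "R \<subseteq> T" by (rule Diff_subset)

lemma conn_refl: "conn a a" unfolding conn_def by (rule exI[of _ "[a]"]) simp

lemma conn_sym: "conn a b \<Longrightarrow> conn b a"
proof -
  assume "conn a b"
  then obtain p where "is_path R a b p" unfolding conn_def by blast
  then have "is_path R b a (rev p)" by (rule is_path_rev)
  then show ?thesis unfolding conn_def by blast
qed

lemma conn_trans: "conn a b \<Longrightarrow> conn b c \<Longrightarrow> conn a c"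
proof -
  assume "conn a b" "conn b c"
  then obtain p q where p: "is_path R a b p" and q: "is_path R b c q" unfolding conn_def by blast
  have "b \<in> set p \<inter> set q" using p q unfolding is_path_def by (metis IntI last_in_set list.set_sel(1))
  then have ne: "set p \<inter> set q \<noteq> {}" by blast
  obtain i j where "is_path R a c (take (Suc i) p @ tl (drop j q))"
    by (rule join[OF p q ne]) blast
  then show ?thesis unfolding conn_def by blast
qed

lemma conn_edge: "{a, b} \<in> R \<Longrightarrow> a \<noteq> b \<Longrightarrow> conn a b"
proof -
  assume "{a, b} \<in> R" "a \<noteq> b"
  then have "is_path R a b [a, b]" unfolding is_path_def by simp
  then show ?thesis unfolding conn_def by blast
qed

lemma uniq_half:
  assumes Da: "Dv a" and Db: "Dv b" and P: "is_path R a b P" and A: "is_path T s a A"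
  shows "b \<in> set A"
proof -
  have aV: "a \<in> V" using Dv_V Da .
  have bV: "b \<in> V" using Dv_V Db .
  have lA: "path_len w A = d s a" using Tpath_len A aV .
  have eA: "path_edges A \<subseteq> EDs" using F5[OF Da TpathE[OF A] lA] .
  have PT: "is_path T a b P" using is_path_mono[OF P RT] .
  have "a \<in> set A \<inter> set P" using A P unfolding is_path_def by (metis IntI last_in_set list.set_sel(1))
  then have ne: "set A \<inter> set P \<noteq> {}" by blast
  obtain i j where ij: "i < length A" "j < length P" "A!i = P!j"
    "is_path T s b (take (Suc i) A @ tl (drop j P))"
    "path_edges (take (Suc i) A @ tl (drop j P)) = path_edges (take (Suc i) A) \<union> path_edges (drop j P)"
    by (rule join[OF A PT ne, where w=w]) blast
  have "path_len w (take (Suc i) A @ tl (drop j P)) = d s b" using Tpath_len ij(4) bV .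
  then have "path_edges (take (Suc i) A @ tl (drop j P)) \<subseteq> EDs" using F5[OF Db TpathE[OF ij(4)]] by simp
  then have e1: "path_edges (drop j P) \<subseteq> EDs" using ij(5) by blast
  have "path_edges (drop j P) \<subseteq> R" using pe_split[OF ij(2)] P unfolding is_path_def by blast
  then have e0: "path_edges (drop j P) = {}" using e1 by blast
  have "Suc j = length P"
  proof (rule ccontr)
    assume "Suc j \<noteq> length P"
    then have "Suc 0 < length (drop j P)" using ij(2) by simp
    then have "{drop j P ! 0, drop j P ! Suc 0} \<in> path_edges (drop j P)" by (rule pe_nth)
    then show False using e0 by simp
  qed
  have "P \<noteq> []" "last P = b" using P unfolding is_path_def by auto
  then have "P ! (length P - 1) = b" by (simp add: last_conv_nth)
  then have "P!j = b" using \<open>Suc j = length P\<close> by (metis diff_Suc_1)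
  then show ?thesis using ij(1,3) nth_mem[OF ij(1)] by simp
qed

lemma uniq: "Dv a \<Longrightarrow> Dv b \<Longrightarrow> conn a b \<Longrightarrow> a = b"
proof (rule ccontr)
  assume Da: "Dv a" and Db: "Dv b" and c: "conn a b" and ne: "a \<noteq> b"
  obtain A where A: "is_path T s a A" using Tpath_ex Dv_V[OF Da] by blast
  obtain B where B: "is_path T s b B" using Tpath_ex Dv_V[OF Db] by blast
  obtain P where P: "is_path R a b P" using c unfolding conn_def by blast
  obtain Q where Q: "is_path R b a Q" using conn_sym[OF c] unfolding conn_def by blast
  have "b \<in> set A" using uniq_half[OF Da Db P A] .
  then have "d s b < d s a" using F6[OF TpathE[OF A] Tpath_len[OF A Dv_V[OF Da]]] ne by blast
  moreover have "a \<in> set B" using uniq_half[OF Db Da Q B] .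
  then have "d s a < d s b" using F6[OF TpathE[OF B] Tpath_len[OF B Dv_V[OF Db]]] ne by blast
  ultimately show False by linarith
qed


lemma walk_back:
  assumes edges: "\<forall>k. Suc k < length q \<longrightarrow> {q!k, q!Suc k} \<in> EDs \<or> conn (q!k) (q!Suc k)"
    and D0: "Dv (q!0)"
  shows "k < length q \<Longrightarrow> \<exists>m\<le>k. Dv (q!m) \<and> conn (q!m) (q!k)"
proof (induction k)
  case 0 then show ?case using D0 conn_refl by blast
next
  case (Suc k)
  then obtain m where m: "m \<le> k" "Dv (q!m)" "conn (q!m) (q!k)" by auto
  have "{q!k, q!Suc k} \<in> EDs \<or> conn (q!k) (q!Suc k)" using edges Suc.prems by blast
  then show ?case
  proof
    assume "{q!k, q!Suc k} \<in> EDs"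
    then have "Dv (q!Suc k)" by (rule ED_Dv) simp
    then show ?case using conn_refl by blast
  next
    assume "conn (q!k) (q!Suc k)"
    then have "conn (q!m) (q!Suc k)" using m(3) conn_trans by blast
    then show ?case using m by (intro exI[of _ m]) simp
  qed
qed

lemma walk_fwd:
  assumes edges: "\<forall>k. Suc k < length q \<longrightarrow> {q!k, q!Suc k} \<in> EDs \<or> conn (q!k) (q!Suc k)"
    and DL: "Dv (q!(length q - 1))"
  shows "k < length q \<Longrightarrow> \<exists>m. k \<le> m \<and> m < length q \<and> Dv (q!m) \<and> conn (q!k) (q!m)"
proof (induction "length q - 1 - k" arbitrary: k)
  case 0
  then have "k = length q - 1" by linarith
  then show ?case using DL conn_refl 0 by blast
next
  case (Suc n)
  then have sk: "Suc k < length q" by linarith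
  have "n = length q - 1 - Suc k" using Suc.hyps(2) by linarith
  then obtain m where m: "Suc k \<le> m" "m < length q" "Dv (q!m)" "conn (q!Suc k) (q!m)"
    using Suc.hyps(1) sk by blast
  have "{q!k, q!Suc k} \<in> EDs \<or> conn (q!k) (q!Suc k)" using edges sk by blast
  then show ?case
  proof
    assume "{q!k, q!Suc k} \<in> EDs"
    then have "Dv (q!k)" by (rule ED_Dv) simp
    then show ?case using conn_refl Suc.prems by blast
  next
    assume "conn (q!k) (q!Suc k)"
    then have "conn (q!k) (q!m)" using m(4) conn_trans by blast
    then show ?case using m by (intro exI[of _ m]) simp
  qed
qed

definition PL where "PL \<rho> u z \<longleftrightarrow> (Dv z \<and> d s z \<le> d s \<rho> \<and> (z \<noteq> \<rho> \<longrightarrow> d s z < d s \<rho>)) \<or> (\<not> Dv z \<and> conn z u)"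
definition PX where "PX \<rho> v z \<longleftrightarrow> z = \<rho> \<or> (\<not> Dv z \<and> conn z v)"

lemma allDv: "is_path E s v p \<Longrightarrow> path_edges p \<subseteq> EDs \<Longrightarrow> z \<in> set p \<Longrightarrow> Dv z"
proof -
  assume p: "is_path E s v p" and e: "path_edges p \<subseteq> EDs" and z: "z \<in> set p"
  show "Dv z"
  proof (cases "2 \<le> length p")
    case True
    obtain e where e1: "e \<in> path_edges p" "z \<in> e" using vertex_in_edge[OF z True] by (elim bexE)
    have "e \<in> EDs" using e e1(1) by (rule subsetD)
    then show ?thesis using e1(2) by (rule ED_Dv)
  next
    case False
    have "p \<noteq> []" "hd p = s" using p unfolding is_path_def by auto
    then have "0 < length p" by simp
    then have "length p = 1" using False by linarith
    then obtain a where "p = [a]" by (metis One_nat_def length_0_conv length_Suc_conv)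
    then show ?thesis using z \<open>hd p = s\<close> Dv_s by simp
  qed
qed

lemma nth_distinct_edge: "is_path F u v q \<Longrightarrow> Suc k < length q \<Longrightarrow> q!k \<noteq> q!Suc k"
  unfolding is_path_def using nth_eq_iff_index_eq[of q k "Suc k"] by auto

lemma root:
  assumes vV: "v \<in> V"
  shows "\<exists>\<rho> X A. Dv \<rho> \<and> is_path R \<rho> v X \<and> is_path T s v A \<and> (\<forall>z\<in>set A. PL \<rho> v z)
     \<and> (\<forall>z\<in>set X. PX \<rho> v z) \<and> d s \<rho> + path_len w X = d s v"
proof -
  obtain A0 where A0: "is_path T s v A0" using Tpath_ex vV by blast
  have edges: "\<forall>k. Suc k < length A0 \<longrightarrow> {A0!k, A0!Suc k} \<in> EDs \<or> conn (A0!k) (A0!Suc k)"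
  proof (intro allI impI)
    fix k assume k: "Suc k < length A0"
    have "{A0!k, A0!Suc k} \<in> T" using pe_nth[OF k] A0 unfolding is_path_def by blast
    moreover have "A0!k \<noteq> A0!Suc k" using nth_distinct_edge[OF A0 k] .
    ultimately show "{A0!k, A0!Suc k} \<in> EDs \<or> conn (A0!k) (A0!Suc k)"
      using conn_edge by blast
  qed
  have ne: "A0 \<noteq> []" "hd A0 = s" "last A0 = v" using A0 unfolding is_path_def by auto
  then have "A0!0 = s" by (simp add: hd_conv_nth)
  then have D0: "Dv (A0!0)" using Dv_s by simp
  have lastv: "A0!(length A0 - 1) = v" using ne by (simp add: last_conv_nth)
  obtain m where m: "Dv (A0!m)" "conn (A0!m) (A0!(length A0 - 1))"
    using walk_back[OF edges D0, of "length A0 - 1"] ne(1) by auto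
  define \<rho> where "\<rho> = A0!m"
  have D\<rho>: "Dv \<rho>" using m \<rho>_def by simp
  have \<rho>V: "\<rho> \<in> V" using Dv_V D\<rho> .
  obtain X where X: "is_path R \<rho> v X" using m lastv \<rho>_def unfolding conn_def by auto
  obtain Ar where Ar: "is_path T s \<rho> Ar" using Tpath_ex \<rho>V by blast
  have lAr: "path_len w Ar = d s \<rho>" using Tpath_len Ar \<rho>V .
  have eAr: "path_edges Ar \<subseteq> EDs" using F5[OF D\<rho> TpathE[OF Ar] lAr] .
  have DAr: "\<forall>z\<in>set Ar. Dv z" using allDv[OF TpathE[OF Ar] eAr] by blast
  have PXX: "\<forall>z\<in>set X. PX \<rho> v z"
  proof
    fix z assume z: "z \<in> set X"
    obtain k where k: "k < length X" "X!k = z" using z by (auto simp: in_set_conv_nth)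
    have c1: "conn \<rho> z" using is_path_take[OF X k(1)] k(2) unfolding conn_def by auto
    have c2: "conn z v" using is_path_drop[OF X k(1)] k(2) unfolding conn_def by auto
    show "PX \<rho> v z"
    proof (cases "Dv z")
      case True then show ?thesis using uniq[OF D\<rho> True c1] unfolding PX_def by simp
    next
      case False then show ?thesis using c2 unfolding PX_def by simp
    qed
  qed
  have dis: "set Ar \<inter> set X \<subseteq> {\<rho>}"
  proof
    fix z assume z: "z \<in> set Ar \<inter> set X"
    then have "Dv z" "PX \<rho> v z" using DAr PXX by auto
    then show "z \<in> {\<rho>}" unfolding PX_def by auto
  qed
  have XT: "is_path T \<rho> v X" using is_path_mono[OF X RT] .
  have A: "is_path T s v (Ar @ tl X)" using is_path_append_shared[OF Ar XT dis] .
  have "path_len w (Ar @ tl X) = path_len w Ar + path_len w X"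
    using Ar X unfolding is_path_def by (intro pl_append_shared) auto
  moreover have "path_len w (Ar @ tl X) = d s v" using Tpath_len A vV .
  ultimately have len: "d s \<rho> + path_len w X = d s v" using lAr by simp
  have PLA: "\<forall>z\<in>set (Ar @ tl X). PL \<rho> v z"
  proof
    fix z assume z: "z \<in> set (Ar @ tl X)"
    then have "z \<in> set Ar \<or> z \<in> set X" by (auto dest: set_tl_sub)
    then show "PL \<rho> v z"
    proof
      assume zA: "z \<in> set Ar"
      then have "Dv z" using DAr by blast
      moreover have "d s z \<le> d s \<rho> \<and> (z \<noteq> \<rho> \<longrightarrow> d s z < d s \<rho>)" using F6[OF TpathE[OF Ar] lAr zA] .
      ultimately show ?thesis unfolding PL_def by blast
    next
      assume zX: "z \<in> set X"
      then have "PX \<rho> v z" using PXX by blast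
      then show ?thesis unfolding PX_def PL_def using D\<rho> by auto
    qed
  qed
  show ?thesis using D\<rho> X A PLA PXX len by blast
qed

lemma path_build:
  assumes L: "is_path E s u L" and PLL: "\<forall>z\<in>set L. PL \<rho>L u z"
    and X: "is_path E \<rho>R v X" and PXX: "\<forall>z\<in>set X. PX \<rho>R v z"
    and S: "is_path E \<rho>R t S" and PS: "\<forall>z\<in>set S. Dv z \<and> (z \<noteq> \<rho>R \<longrightarrow> d s \<rho>R < d s z)"
    and DR: "Dv \<rho>R" and ne: "\<rho>L \<noteq> \<rho>R" and le: "d s \<rho>L \<le> d s \<rho>R"
    and nc: "\<not> conn u v" and uv: "{u, v} \<in> E"
  shows "is_path E s t (L @ (rev X @ tl S)) \<and>
    path_len w (L @ (rev X @ tl S)) = path_len w L + w {u, v} + path_len w X + path_len w S \<and>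
    {u, v} \<in> path_edges (L @ (rev X @ tl S))"
proof -
  have rX: "is_path E v \<rho>R (rev X)" using is_path_rev[OF X] .
  have d1: "set (rev X) \<inter> set S \<subseteq> {\<rho>R}"
  proof
    fix z assume z: "z \<in> set (rev X) \<inter> set S"
    then have "PX \<rho>R v z" "Dv z" using PXX PS by auto
    then show "z \<in> {\<rho>R}" unfolding PX_def by auto
  qed
  have M: "is_path E v t (rev X @ tl S)" using is_path_append_shared[OF rX S d1] .
  have S1: "S = \<rho>R # tl S" using S unfolding is_path_def by (metis list.collapse)
  have nS: "\<rho>R \<notin> set (tl S)" using S S1 unfolding is_path_def by (metis distinct.simps(2))
  have d2: "set L \<inter> set (rev X @ tl S) = {}"
  proof (rule ccontr)
    assume "set L \<inter> set (rev X @ tl S) \<noteq> {}"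
    then obtain z where zL: "z \<in> set L" and zM: "z \<in> set X \<or> z \<in> set (tl S)" by auto
    have pl: "PL \<rho>L u z" using PLL zL by blast
    from zM show False
    proof
      assume zX: "z \<in> set X"
      then have "PX \<rho>R v z" using PXX by blast
      then show False unfolding PX_def
      proof
        assume "z = \<rho>R"
        then show False using pl DR ne le unfolding PL_def by auto
      next
        assume "\<not> Dv z \<and> conn z v"
        then show False using pl nc conn_sym conn_trans unfolding PL_def by blast
      qed
    next
      assume zS: "z \<in> set (tl S)"
      then have "z \<in> set S" "z \<noteq> \<rho>R" using nS by (auto dest: set_tl_sub)
      then have "Dv z" "d s \<rho>R < d s z" using PS by auto
      then show False using pl le unfolding PL_def by auto
    qed
  qed
  have P: "is_path E s t (L @ (rev X @ tl S))" using is_path_append[OF L M d2 uv] .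
  have Lne: "L \<noteq> []" "last L = u" using L unfolding is_path_def by auto
  have Mne: "rev X @ tl S \<noteq> []" "hd (rev X @ tl S) = v" using M unfolding is_path_def by auto
  have "path_len w (L @ (rev X @ tl S)) = path_len w L + w {u, v} + path_len w (rev X @ tl S)"
    using pl_append[OF Lne(1) Mne(1)] Lne(2) Mne(2) by simp
  moreover have "path_len w (rev X @ tl S) = path_len w (rev X) + path_len w S"
    using rX S unfolding is_path_def by (intro pl_append_shared) auto
  moreover have "{u, v} \<in> path_edges (L @ (rev X @ tl S))"
    using pe_append[OF Lne(1) Mne(1)] Lne(2) Mne(2) by simp
  ultimately show ?thesis using P by simp
qed


lemma lower_edge:
  assumes q: "is_path E s t q" and out: "path_edges q - EDs \<noteq> {}"
  shows "\<exists>k. Suc k < length q \<and> {q!k, q!Suc k} \<in> Etilde E w s t T"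
proof (rule ccontr)
  assume none: "\<not> (\<exists>k. Suc k < length q \<and> {q!k, q!Suc k} \<in> Etilde E w s t T)"
  have edges: "\<forall>k. Suc k < length q \<longrightarrow> {q!k, q!Suc k} \<in> EDs \<or> conn (q!k) (q!Suc k)"
  proof (intro allI impI)
    fix k assume k: "Suc k < length q"
    have eE: "{q!k, q!Suc k} \<in> E" using pe_nth[OF k] q unfolding is_path_def by blast
    have neq: "q!k \<noteq> q!Suc k" using nth_distinct_edge[OF q k] .
    have nE: "{q!k, q!Suc k} \<notin> Etilde E w s t T" using none k by blast
    show "{q!k, q!Suc k} \<in> EDs \<or> conn (q!k) (q!Suc k)"
    proof (cases "{q!k, q!Suc k} \<in> EDs")
      case True then show ?thesis by simp
    next
      case nD: False
      show ?thesis
      proof (cases "{q!k, q!Suc k} \<in> T")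
        case True
        then have "{q!k, q!Suc k} \<in> R" using nD by simp
        then show ?thesis using conn_edge neq by blast
      next
        case False
        then have "{q!k, q!Suc k} \<in> E - (T \<union> EDs)" using eE nD by simp
        then have "\<not> (\<exists>a b. {q!k, q!Suc k} = {a, b} \<and> \<not> (\<exists>p. is_path R a b p))"
          using nE unfolding Etilde_def by simp
        then have "\<exists>p. is_path R (q!k) (q!Suc k) p" by blast
        then show ?thesis unfolding conn_def by simp
      qed
    qed
  qed
  obtain e where e: "e \<in> path_edges q" "e \<notin> EDs" using out by blast
  then obtain i where i: "Suc i < length q" "e = {q!i, q!Suc i}" using pe_elem by blast
  have ci: "conn (q!i) (q!Suc i)" using edges i e(2) by blast
  have ne: "q \<noteq> []" "hd q = s" "last q = t" "distinct q" using q unfolding is_path_def by auto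
  have D0: "Dv (q!0)" using ne Dv_s by (simp add: hd_conv_nth)
  have DL: "Dv (q!(length q - 1))" using ne Dv_t by (simp add: last_conv_nth)
  obtain m1 where m1: "m1 \<le> i" "Dv (q!m1)" "conn (q!m1) (q!i)"
    using walk_back[OF edges D0, of i] i(1) by auto
  obtain m2 where m2: "Suc i \<le> m2" "m2 < length q" "Dv (q!m2)" "conn (q!Suc i) (q!m2)"
    using walk_fwd[OF edges DL, of "Suc i"] i(1) by auto
  have "conn (q!m1) (q!m2)" using m1(3) ci m2(4) conn_trans by blast
  then have "q!m1 = q!m2" using uniq m1(2) m2(3) by blast
  moreover have "m1 < length q" using m1(1) i(1) by linarith
  ultimately have "m1 = m2" using nth_eq_iff_index_eq[OF ne(4)] m2(2) by blast
  then show False using m1(1) m2(1) by linarith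
qed

lemma lower_len:
  assumes q: "is_path E s t q" and k: "Suc k < length q"
  shows "d s (q!k) + w {q!k, q!Suc k} + d (q!Suc k) t \<le> path_len w q"
proof -
  have kq: "k < length q" using k by linarith
  have eq: "q = take (Suc k) q @ drop (Suc k) q" by simp
  have f1: "path_len w q = path_len w (take (Suc k) q) + w {last (take (Suc k) q), hd (drop (Suc k) q)} + path_len w (drop (Suc k) q)"
    by (subst eq, rule pl_append) (use k in auto)
  have f2: "last (take (Suc k) q) = q!k" using last_take_Suc[OF kq] .
  have f3: "hd (drop (Suc k) q) = q!Suc k" using hd_drop_conv_nth[OF k] .
  have "path_len w q = path_len w (take (Suc k) q) + w {q!k, q!Suc k} + path_len w (drop (Suc k) q)"
    using f1 f2 f3 by simp
  moreover have "d s (q!k) \<le> path_len w (take (Suc k) q)" using dist_le[OF is_path_take[OF q kq]] .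
  moreover have "d (q!Suc k) t \<le> path_len w (drop (Suc k) q)" using dist_le[OF is_path_drop[OF q k]] .
  ultimately show ?thesis by linarith
qed


lemma exists_out:
  assumes xyE: "{x, y} \<in> Etilde E w s t T"
  shows "\<exists>p. is_path E s t p \<and> path_edges p - EDs \<noteq> {} \<and> path_len w p \<le> d s x + w {x, y} + d y t"
proof -
  let ?F = "d s x + w {x, y} + d y t"
  have xyE1: "{x, y} \<in> E" "{x, y} \<notin> EDs" "{x, y} \<notin> T" using xyE unfolding Etilde_def by auto
  obtain a b where ab: "{x, y} = {a, b}" "\<not> (\<exists>p. is_path R a b p)" using xyE unfolding Etilde_def by blast
  have nab: "\<not> conn a b" using ab(2) unfolding conn_def .
  have nc: "\<not> conn x y"
  proof
    assume c: "conn x y"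
    from ab(1) have "(x = a \<and> y = b) \<or> (x = b \<and> y = a)" by (auto simp: doubleton_eq_iff)
    then show False using c nab conn_sym by blast
  qed
  have xV: "x \<in> V" and yV: "y \<in> V" using edgeV[OF xyE1(1)] by auto
  have wxy: "w {x, y} > 0" using wpos xyE1(1) by blast
  have yx: "{y, x} = {x, y}" by (rule insert_commute)
  obtain r X A where rx: "Dv r" "is_path R r x X" "is_path T s x A" "\<forall>z\<in>set A. PL r x z"
     "\<forall>z\<in>set X. PX r x z" "d s r + path_len w X = d s x" using root[OF xV] by blast
  obtain r' X' A' where ry: "Dv r'" "is_path R r' y X'" "is_path T s y A'" "\<forall>z\<in>set A'. PL r' y z"
     "\<forall>z\<in>set X'. PX r' y z" "d s r' + path_len w X' = d s y" using root[OF yV] by blast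
  have rr: "r \<noteq> r'"
  proof
    assume "r = r'"
    have "conn r x" "conn r' y" using rx(2) ry(2) unfolding conn_def by auto
    then have "conn x y" using \<open>r = r'\<close> conn_sym conn_trans by blast
    then show False using nc by simp
  qed
  have lA: "path_len w A = d s x" using Tpath_len rx(3) xV .
  have lA': "path_len w A' = d s y" using Tpath_len ry(3) yV .
  have AE: "is_path E s x A" using TpathE rx(3) .
  have A'E: "is_path E s y A'" using TpathE ry(3) .
  have RE: "R \<subseteq> E" using RT TE by (rule subset_trans)
  have XE: "is_path E r x X" using is_path_mono[OF rx(2) RE] .
  have X'E: "is_path E r' y X'" using is_path_mono[OF ry(2) RE] .
  obtain B where B: "is_path E y t B" "path_len w B = d y t" using dist_attained[OF yV tV] by blast
  show ?thesis
  proof (cases "set A \<inter> set B = {}")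
    case True
    have P: "is_path E s t (A @ B)" using is_path_append[OF AE B(1) True xyE1(1)] .
    have An: "A \<noteq> []" "last A = x" using AE unfolding is_path_def by auto
    have Bn: "B \<noteq> []" "hd B = y" using B(1) unfolding is_path_def by auto
    have "path_len w (A @ B) = ?F" using pl_append[OF An(1) Bn(1)] An(2) Bn(2) lA B(2) by simp
    moreover have "{x, y} \<in> path_edges (A @ B)" using pe_append[OF An(1) Bn(1)] An(2) Bn(2) by simp
    ultimately show ?thesis using P xyE1(2) by (intro exI[of _ "A @ B"]) auto
  next
    case False
    obtain i j where ij: "i < length A" "j < length B" "A!i = B!j"
      "is_path E s t (take (Suc i) A @ tl (drop j B))"
      "path_len w (take (Suc i) A @ tl (drop j B)) = path_len w (take (Suc i) A) + path_len w (drop j B)"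
      "path_edges (take (Suc i) A @ tl (drop j B)) = path_edges (take (Suc i) A) \<union> path_edges (drop j B)"
      by (rule join[OF AE B(1) False, where w=w]) blast
    define c where "c = A!i"
    have cA: "c \<in> set A" using ij(1) c_def by simp
    show ?thesis
    proof (cases "Dv c")
      case False
      have "A \<noteq> []" "hd A = s" using AE unfolding is_path_def by auto
      then have "A!0 = s" by (simp add: hd_conv_nth)
      have "i \<noteq> 0"
      proof
        assume "i = 0"
        then have "c = s" using c_def \<open>A!0 = s\<close> by simp
        then show False using False Dv_s by simp
      qed
      then have i1: "Suc (i - 1) < length (take (Suc i) A)" using ij(1) by simp
      have "{take (Suc i) A ! (i-1), take (Suc i) A ! Suc (i-1)} \<in> path_edges (take (Suc i) A)"
        using pe_nth[OF i1] .
      moreover have "take (Suc i) A ! Suc (i-1) = c" using \<open>i \<noteq> 0\<close> c_def by simp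
      ultimately have e1: "{take (Suc i) A ! (i-1), c} \<in> path_edges (take (Suc i) A @ tl (drop j B))"
        using ij(6) by simp
      have e2: "{take (Suc i) A ! (i-1), c} \<notin> EDs" using ED_Dv False by blast
      have "path_len w (take (Suc i) A) \<le> path_len w A" using pl_take_le[OF path_pos[OF AE] ij(1)] .
      moreover have "path_len w (drop j B) \<le> path_len w B" using pl_drop_le[OF path_pos[OF B(1)] ij(2)] .
      ultimately have "path_len w (take (Suc i) A @ tl (drop j B)) \<le> ?F"
        using ij(5) lA B(2) wxy by linarith
      then show ?thesis using ij(4) e1 e2 by blast
    next
      case Dc: True
      have cV: "c \<in> V" using Dv_V Dc .
      have "PL r x c" using rx(4) cA by blast
      then have csr: "d s c \<le> d s r" using Dc unfolding PL_def by auto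
      have Bj: "B!j = c" using ij(3) c_def by simp
      have sB: "path_len w B = path_len w (take (Suc j) B) + path_len w (drop j B)" using pl_split ij(2) .
      have l2: "d c t \<le> path_len w (drop j B)" using dist_le[OF is_path_drop[OF B(1) ij(2)]] Bj by simp
      obtain Pc where Pc: "is_path E s c Pc" "path_len w Pc = d s c" using dist_attained[OF sV cV] by blast
      have "is_path E c y (rev (take (Suc j) B))" using is_path_rev[OF is_path_take[OF B(1) ij(2)]] Bj by simp
      then have l1: "d s y \<le> d s c + path_len w (take (Suc j) B)" using tri[OF Pc(1)] Pc(2) by fastforce
      have sc: "d s c + d c t = d s t" using Dv_sum Dc .
      have sr: "d s r + d r t = d s t" using Dv_sum rx(1) .
      have sr': "d s r' + d r' t = d s t" using Dv_sum ry(1) .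
      obtain S where S: "is_path E r t S" "path_len w S = d r t" "\<forall>z\<in>set S. Dv z \<and> (z \<noteq> r \<longrightarrow> d s r < d s z)"
        using Ssuf[OF rx(1)] by blast
      obtain S' where S': "is_path E r' t S'" "path_len w S' = d r' t" "\<forall>z\<in>set S'. Dv z \<and> (z \<noteq> r' \<longrightarrow> d s r' < d s z)"
        using Ssuf[OF ry(1)] by blast
      show ?thesis
      proof (cases "d s r' \<le> d s r")
        case True
        have nc': "\<not> conn y x" using nc conn_sym by blast
        have yxE: "{y, x} \<in> E" using xyE1(1) yx by simp
        have P: "is_path E s t (A' @ (rev X @ tl S)) \<and>
          path_len w (A' @ (rev X @ tl S)) = path_len w A' + w {y, x} + path_len w X + path_len w S \<and>
          {y, x} \<in> path_edges (A' @ (rev X @ tl S))"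
          by (rule path_build[OF A'E ry(4) XE rx(5) S(1) S(3) rx(1) rr[symmetric] True nc' yxE])
        have "path_len w (A' @ (rev X @ tl S)) \<le> ?F"
          using P lA' yx rx(6) S(2) B(2) sB l1 l2 sc sr csr by simp
        then show ?thesis using P xyE1(2) yx by (intro exI[of _ "A' @ (rev X @ tl S)"]) auto
      next
        case False
        then have le: "d s r \<le> d s r'" by linarith
        have P: "is_path E s t (A @ (rev X' @ tl S')) \<and>
          path_len w (A @ (rev X' @ tl S')) = path_len w A + w {x, y} + path_len w X' + path_len w S' \<and>
          {x, y} \<in> path_edges (A @ (rev X' @ tl S'))"
          by (rule path_build[OF AE rx(4) X'E ry(5) S'(1) S'(3) ry(1) rr le nc xyE1(1)])
        have "path_len w (A @ (rev X' @ tl S')) \<le> ?F"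
          using P lA ry(6) S'(2) B(2) sB l1 l2 sc sr' csr False by simp
        then show ?thesis using P xyE1(2) by (intro exI[of _ "A @ (rev X' @ tl S')"]) auto
      qed
    qed
  qed
qed


lemma main:
  assumes min: "\<forall>u v. fval E w s t T x y \<le> fval E w s t T u v"
    and fin: "fval E w s t T x y \<noteq> \<infinity>"
  shows "(\<exists>p. is_path E s t p \<and> ereal (path_len w p) = fval E w s t T x y
              \<and> path_edges p \<inter> Etilde E w s t T \<noteq> {})
       \<and> (\<forall>p. is_path E s t p \<and> ereal (path_len w p) = fval E w s t T x y
              \<and> path_edges p \<inter> Etilde E w s t T \<noteq> {} \<longrightarrow> optimal_outward E w s t p)"
proof -
  have xyE: "{x, y} \<in> Etilde E w s t T" using fin unfolding fval_def by (auto split: if_splits)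
  define F where "F = d s x + w {x, y} + d y t"
  have fF: "fval E w s t T x y = ereal F" using xyE unfolding fval_def F_def by simp
  have LB: "\<And>q. is_path E s t q \<Longrightarrow> path_edges q - EDs \<noteq> {} \<Longrightarrow> F \<le> path_len w q"
  proof -
    fix q assume q: "is_path E s t q" and out: "path_edges q - EDs \<noteq> {}"
    obtain k where k: "Suc k < length q" "{q!k, q!Suc k} \<in> Etilde E w s t T" using lower_edge[OF q out] by blast
    have "fval E w s t T (q!k) (q!Suc k) = ereal (d s (q!k) + w {q!k, q!Suc k} + d (q!Suc k) t)"
      using k(2) unfolding fval_def by simp
    then have "ereal F \<le> ereal (d s (q!k) + w {q!k, q!Suc k} + d (q!Suc k) t)" using min fF by metis
    then have "F \<le> d s (q!k) + w {q!k, q!Suc k} + d (q!Suc k) t" by simp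
    then show "F \<le> path_len w q" using lower_len[OF q k(1)] by linarith
  qed
  have EtD: "\<And>e. e \<in> Etilde E w s t T \<Longrightarrow> e \<notin> EDs" unfolding Etilde_def by auto
  obtain p where p: "is_path E s t p" "path_edges p - EDs \<noteq> {}" "path_len w p \<le> F"
    using exists_out[OF xyE] F_def by blast
  have lp: "path_len w p = F" using LB[OF p(1) p(2)] p(3) by linarith
  obtain k where k: "Suc k < length p" "{p!k, p!Suc k} \<in> Etilde E w s t T" using lower_edge[OF p(1) p(2)] by blast
  have "{p!k, p!Suc k} \<in> path_edges p" using pe_nth[OF k(1)] .
  then have part1: "is_path E s t p \<and> ereal (path_len w p) = fval E w s t T x y
              \<and> path_edges p \<inter> Etilde E w s t T \<noteq> {}"
    using p(1) lp fF k(2) by (intro conjI) auto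
  have part2: "\<forall>p. is_path E s t p \<and> ereal (path_len w p) = fval E w s t T x y
              \<and> path_edges p \<inter> Etilde E w s t T \<noteq> {} \<longrightarrow> optimal_outward E w s t p"
  proof (intro allI impI)
    fix p assume h: "is_path E s t p \<and> ereal (path_len w p) = fval E w s t T x y
              \<and> path_edges p \<inter> Etilde E w s t T \<noteq> {}"
    then have pp: "is_path E s t p" and lp: "path_len w p = F" using fF by auto
    from h obtain e where e: "e \<in> path_edges p" "e \<in> Etilde E w s t T" by blast
    then have out: "path_edges p - EDs \<noteq> {}" using EtD by blast
    show "optimal_outward E w s t p" unfolding optimal_outward_def
      using pp out lp LB by auto
  qed
  show ?thesis using part1 part2 by blast
qed

end

theorem lemma13:
  fixes V :: "'a set" and E :: "'a set set" and w :: "'a set \<Rightarrow> real"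
    and s t x y :: 'a and T :: "'a set set"
  assumes "simple_graph V E" and "connected_graph V E"
    and "\<forall>e\<in>E. w e > 0"
    and "s \<in> V" and "t \<in> V"
    and "shortest_path_tree V E w s T"
    and "\<forall>u v. fval E w s t T x y \<le> fval E w s t T u v"
    and "fval E w s t T x y \<noteq> \<infinity>"
  shows "(\<exists>p. is_path E s t p \<and> ereal (path_len w p) = fval E w s t T x y
              \<and> path_edges p \<inter> Etilde E w s t T \<noteq> {})
       \<and> (\<forall>p. is_path E s t p \<and> ereal (path_len w p) = fval E w s t T x y
              \<and> path_edges p \<inter> Etilde E w s t T \<noteq> {} \<longrightarrow> optimal_outward E w s t p)"
proof -
  interpret G V E w s t T using assms(1-6) by unfold_locales
  show ?thesis using main[OF assms(7) assms(8)] .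
qed

end
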